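(* For every $n\ge2$: no $\omega\in\widetilde{S}_n$ avoids $1234$; for each $p\in\{1243,1324,2134,2143\}$ exactly one $\omega\in\widetilde{S}_n$ (the identity) avoids $p$; and for each $p\in\{1342,1423,2314,3124\}$ the number of $\omega\in\widetilde{S}_n$ avoiding $p$ is $\binom{2n-1}{n}$. Equivalently, with $f^p(t)=\sum_{n\ge2}\#\{\omega\in\widetilde{S}_n:\omega\text{ avoids }p\}\,t^n$: $f^{1234}(t)=0$; $f^{1243}=f^{1324}=f^{2134}=f^{2143}=\sum_{n\ge2}t^n$; $f^{1342}=f^{1423}=f^{2314}=f^{3124}=\sum_{n\ge2}\binom{2n-1}{n}t^n$.
   Context: For $n\ge 2$, the affine symmetric group $\widetilde{S}_n$ is the set of bijections $\omega:\mathbb{Z}\to\mathbb{Z}$ such that $\omega(i+n)=\omega(i)+n$ for all $i\in\mathbb{Z}$ and $\sum_{i=1}^n\omega(i)=\binom{n+1}{2}$; write $\omega_i=\omega(i)$. For $p\in S_k$, $\omega$ contains $p$ if there exist integers $i_1<\cdots<i_k$ such that $\omega_{i_1}\cdots\omega_{i_k}$ has the same relative order as $p_1\cdots p_k$; otherwise $\omega$ avoids $p$. *)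

theory Defs
  imports Main
begin

definition affine_perm :: "nat \<Rightarrow> (int \<Rightarrow> int) \<Rightarrow> bool" where
  "affine_perm n w \<longleftrightarrow> bij w \<and> (\<forall>i. w (i + int n) = w i + int n)
     \<and> (\<Sum>i = 1..int n. w i) = int ((n + 1) choose 2)"

definition affine_sym_group :: "nat \<Rightarrow> (int \<Rightarrow> int) set" where
  "affine_sym_group n = {w. affine_perm n w}"

definition contains_pattern :: "(int \<Rightarrow> int) \<Rightarrow> nat list \<Rightarrow> bool" where
  "contains_pattern w p \<longleftrightarrow> (\<exists>\<iota> :: nat \<Rightarrow> int.
      (\<forall>a b. a < b \<and> b < length p \<longrightarrow> \<iota> a < \<iota> b) \<and>
      (\<forall>a < length p. \<forall>b < length p. w (\<iota> a) < w (\<iota> b) \<longleftrightarrow> p ! a < p ! b))"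

definition avoids_pattern :: "(int \<Rightarrow> int) \<Rightarrow> nat list \<Rightarrow> bool" where
  "avoids_pattern w p \<longleftrightarrow> \<not> contains_pattern w p"

definition avoiders :: "nat \<Rightarrow> nat list \<Rightarrow> (int \<Rightarrow> int) set" where
  "avoiders n p = {w \<in> affine_sym_group n. avoids_pattern w p}"

end

theory Submission
  imports Defs
begin

lemma per_int:
  fixes f :: "int \<Rightarrow> 'a"
  assumes "\<And>t. f (t + int n) = f t"
  shows "f (t + q * int n) = f t"
proof (induction q rule: int_induct[where k=0])
  case base then show ?case by simp
next
  case (step1 i) then show ?case using assms[of "t + i * int n"] by (simp add: algebra_simps)
next
  case (step2 i) then show ?case using assms[of "t + (i - 1) * int n"] by (simp add: algebra_simps)
qed

lemma per_mod:
  fixes f :: "int \<Rightarrow> 'a"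
  assumes "\<And>t. f (t + int n) = f t"
  shows "f t = f (t mod int n)"
proof -
  have "t = t mod int n + (t div int n) * int n" by simp
  then show ?thesis using per_int[of f n, OF assms, of "t mod int n" "t div int n"] by metis
qed

lemma aff_int:
  assumes "\<And>t. w (t + int n) = w t + int n"
  shows "w (t + q * int n) = w t + q * int n"
proof (induction q rule: int_induct[where k=0])
  case base then show ?case by simp
next
  case (step1 i) then show ?case using assms[of "t + i * int n"] by (simp add: algebra_simps)
next
  case (step2 i) then show ?case using assms[of "t + (i - 1) * int n"] by (simp add: algebra_simps)
qed

definition Cgood :: "nat \<Rightarrow> (int \<Rightarrow> int) \<Rightarrow> bool" where
  "Cgood n c \<longleftrightarrow> 0 < n \<and> (\<forall>t. 0 \<le> c t) \<and> (\<forall>t. c (t + int n) = c t)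
     \<and> (\<forall>t. c t \<le> c (t+1) + 1) \<and> (\<exists>z. c z = 0)"

definition dd :: "(int \<Rightarrow> int) \<Rightarrow> int \<Rightarrow> nat" where
  "dd c t = (LEAST k. 0 < k \<and> c (t - int k) \<le> c t)"

definition sf :: "(int \<Rightarrow> int) \<Rightarrow> int \<Rightarrow> int" where
  "sf c t = t - int (dd c t)"

definition om :: "(int \<Rightarrow> int) \<Rightarrow> int \<Rightarrow> int" where
  "om c t = sf c t + 1 + c t"

lemma zero_below:
  assumes "Cgood n c"
  shows "\<exists>z. z < t \<and> c z = 0"
proof -
  from assms obtain z where z: "c z = 0" and n: "0 < n" and per: "\<And>t. c (t + int n) = c t"
    unfolding Cgood_def by blast
  define q where "q = (t - z) div int n - 1"
  have h: "((t - z) div int n) * int n = t - z - (t - z) mod int n" by (simp add: minus_mod_eq_div_mult)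
  have h2: "q * int n = ((t - z) div int n) * int n - int n" unfolding q_def by (simp add: algebra_simps)
  have "(t - z) mod int n \<ge> 0" using n by simp
  then have "z + q * int n < t" using h h2 n by linarith
  moreover have "c (z + q * int n) = 0" using per_int[of c n, OF per] z by simp
  ultimately show ?thesis by blast
qed

lemma zero_above:
  assumes "Cgood n c"
  shows "\<exists>z. t < z \<and> c z = 0"
proof -
  from assms obtain z where z: "c z = 0" and n: "0 < n" and per: "\<And>t. c (t + int n) = c t"
    unfolding Cgood_def by blast
  define q where "q = (t - z) div int n + 1"
  have h: "((t - z) div int n) * int n = t - z - (t - z) mod int n" by (simp add: minus_mod_eq_div_mult)
  have h2: "q * int n = ((t - z) div int n) * int n + int n" unfolding q_def by (simp add: algebra_simps)
  have "(t - z) mod int n < int n" using n by simp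
  then have "t < z + q * int n" using h h2 n by linarith
  moreover have "c (z + q * int n) = 0" using per_int[of c n, OF per] z by simp
  ultimately show ?thesis by blast
qed

lemma dd_ex:
  assumes "Cgood n c"
  shows "\<exists>k. 0 < k \<and> c (t - int k) \<le> c t"
proof -
  obtain z where "z < t" "c z = 0" using zero_below[OF assms] by blast
  moreover have "0 \<le> c t" using assms unfolding Cgood_def by blast
  ultimately show ?thesis by (intro exI[of _ "nat (t - z)"]) auto
qed

lemma sf_props:
  assumes "Cgood n c"
  shows "sf c t < t" "c (sf c t) \<le> c t"
proof -
  have "0 < dd c t \<and> c (t - int (dd c t)) \<le> c t"
    unfolding dd_def using LeastI_ex[OF dd_ex[OF assms]] .
  then show "sf c t < t" "c (sf c t) \<le> c t" unfolding sf_def by auto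
qed

lemma sf_between:
  assumes "Cgood n c" "sf c t < u" "u < t"
  shows "c t < c u"
proof -
  define k where "k = nat (t - u)"
  have k: "0 < k" "k < dd c t" "u = t - int k" using assms unfolding k_def sf_def by auto
  have "\<not> (0 < k \<and> c (t - int k) \<le> c t)"
    using not_less_Least[of k "\<lambda>k. 0 < k \<and> c (t - int k) \<le> c t"] k(2) unfolding dd_def by blast
  then show ?thesis using k by auto
qed

lemma sf_max:
  assumes "Cgood n c" "u < t" "c u \<le> c t"
  shows "u \<le> sf c t"
  using sf_between[OF assms(1), of t u] assms by force

lemma P_mono_aux:
  assumes "Cgood n c"
  shows "a + c a \<le> (a + int k) + c (a + int k)"
proof (induction k)
  case 0 then show ?case by simp
next
  case (Suc k)
  have "c (a + int k) \<le> c (a + int k + 1) + 1" using assms unfolding Cgood_def by blast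
  moreover have e: "a + int (Suc k) = a + int k + 1" by simp
  ultimately show ?case unfolding e using Suc by linarith
qed

lemma P_mono:
  assumes "Cgood n c" "a \<le> b"
  shows "a + c a \<le> b + c b"
  using P_mono_aux[OF assms(1), of a "nat (b - a)"] assms(2) by simp

lemma crit1:
  assumes "Cgood n c" "t1 < t2" "t1 \<le> sf c t2"
  shows "om c t1 < om c t2"
proof -
  have "om c t1 \<le> t1 + c t1" using sf_props(1)[OF assms(1), of t1] unfolding om_def by simp
  also have "\<dots> \<le> sf c t2 + c (sf c t2)" using P_mono[OF assms(1) assms(3)] .
  also have "\<dots> \<le> sf c t2 + c t2" using sf_props(2)[OF assms(1), of t2] by simp
  also have "\<dots> < om c t2" unfolding om_def by simp
  finally show ?thesis .
qed

lemma crit2: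
  assumes "Cgood n c" "t1 < t2" "sf c t2 < t1"
  shows "om c t2 < om c t1"
proof -
  have ct: "c t2 < c t1" using sf_between[OF assms(1) assms(3) assms(2)] .
  have "c (sf c t2) \<le> c t1" using sf_props(2)[OF assms(1), of t2] ct by simp
  then have "sf c t2 \<le> sf c t1" using sf_max[OF assms(1) assms(3)] by simp
  then show ?thesis using ct unfolding om_def by simp
qed

lemma crit:
  assumes "Cgood n c" "t1 < t2"
  shows "om c t1 < om c t2 \<longleftrightarrow> t1 \<le> sf c t2"
  using crit1[OF assms] crit2[OF assms] by force

lemma om_inj:
  assumes "Cgood n c"
  shows "inj (om c)"
proof (rule injI)
  fix x y assume e: "om c x = om c y"
  show "x = y"
  proof (rule ccontr)
    assume "x \<noteq> y"
    then consider "x < y" | "y < x" by linarith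
    then show False
    proof cases
      case 1 then show False using crit1[OF assms 1] crit2[OF assms 1] e by (cases "x \<le> sf c y") auto
    next
      case 2 then show False using crit1[OF assms 2] crit2[OF assms 2] e by (cases "y \<le> sf c x") auto
    qed
  qed
qed


lemma dd_per:
  assumes "Cgood n c"
  shows "dd c (t + int n) = dd c t"
proof -
  have per: "\<And>t. c (t + int n) = c t" using assms unfolding Cgood_def by blast
  have "\<And>k. c (t + int n - int k) = c (t - int k)" using per[of "t - int _"] by (simp add: algebra_simps)
  then show ?thesis unfolding dd_def using per[of t] by simp
qed

lemma om_per:
  assumes "Cgood n c"
  shows "om c (t + int n) = om c t + int n"
  using dd_per[OF assms, of t] assms unfolding om_def sf_def Cgood_def by simp

lemma om_range:
  assumes "Cgood n c" "c a = 0" "c b = 0" "a < t" "t \<le> b"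
  shows "a < om c t \<and> om c t \<le> b"
proof
  have "om c t \<le> t + c t" using sf_props(1)[OF assms(1), of t] unfolding om_def by simp
  also have "\<dots> \<le> b + c b" using P_mono[OF assms(1) assms(5)] .
  finally show "om c t \<le> b" using assms(3) by simp
  have "0 \<le> c t" using assms(1) unfolding Cgood_def by blast
  then have "a \<le> sf c t" using sf_max[OF assms(1) assms(4)] assms(2) by simp
  then show "a < om c t" using \<open>0 \<le> c t\<close> unfolding om_def by simp
qed

lemma om_block:
  assumes "Cgood n c" "c a = 0"
  shows "om c ` {a<..a + int n} = {a<..a + int n}"
proof (rule endo_inj_surj)
  show "finite {a<..a + int n}" by simp
  have "c (a + int n) = 0" using assms unfolding Cgood_def by simp
  then show "om c ` {a<..a + int n} \<subseteq> {a<..a + int n}"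
    using om_range[OF assms(1,2)] by fastforce
  show "inj_on (om c) {a<..a + int n}" using om_inj[OF assms(1)] by (simp add: inj_on_def inj_def)
qed

lemma om_surj:
  assumes "Cgood n c"
  shows "surj (om c)"
proof -
  { fix v
    from assms obtain z where z: "c z = 0" and n: "0 < n" and per: "\<And>t. c (t + int n) = c t"
      unfolding Cgood_def by blast
    define q where "q = (v - z - 1) div int n"
    define a where "a = z + q * int n"
    have ca: "c a = 0" unfolding a_def using per_int[of c n, OF per] z by simp
    have h: "q * int n = v - z - 1 - (v - z - 1) mod int n" unfolding q_def by (simp add: minus_mod_eq_div_mult)
    have "(v - z - 1) mod int n \<ge> 0" "(v - z - 1) mod int n < int n" using n by simp_all
    then have "v \<in> {a<..a + int n}" unfolding a_def using h by auto
    then have "v \<in> range (om c)" using om_block[OF assms ca] by blast }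
  then show ?thesis by blast
qed

lemma sum_int_top:
  fixes g :: "int \<Rightarrow> int"
  assumes "x \<le> y + 1"
  shows "sum g {x..y+1} = sum g {x..y} + g (y+1)"
proof -
  have "{x..y+1} = insert (y+1) {x..y}" using assms by auto
  then show ?thesis by simp
qed

lemma sum_int_bot:
  fixes g :: "int \<Rightarrow> int"
  assumes "x \<le> y"
  shows "sum g {x..y} = g x + sum g {x+1..y}"
proof -
  have "{x..y} = insert x {x+1..y}" using assms by auto
  then show ?thesis by simp
qed

lemma win_sum:
  fixes g :: "int \<Rightarrow> int"
  assumes per: "\<And>t. g (t + int n) = g t"
  shows "sum g {a+1..a+int n} = sum g {1..int n}"
proof (cases "n = 0")
  case True then show ?thesis by simp
next
  case False
  have step: "sum g {(b+1)+1..(b+1)+int n} = sum g {b+1..b+int n}" for b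
  proof -
    have "sum g {b+1..b+int n + 1} = sum g {b+1..b+int n} + g (b + int n + 1)"
      using sum_int_top[of "b+1" "b + int n" g] False by simp
    moreover have "sum g {b+1..b+int n + 1} = g (b+1) + sum g {b+1+1..b+int n+1}"
      using sum_int_bot[of "b+1" "b + int n + 1" g] by simp
    moreover have "g (b + int n + 1) = g (b+1)" using per[of "b+1"] by (simp add: algebra_simps)
    ultimately show ?thesis by (simp add: algebra_simps)
  qed
  show ?thesis
  proof (induction a rule: int_induct[where k=0])
    case base then show ?case by simp
  next
    case (step1 i) then show ?case using step[of i] by simp
  next
    case (step2 i) then show ?case using step[of "i - 1"] by simp
  qed
qed

lemma gauss_int: "(\<Sum>i = 1..int n. i) = int ((n + 1) choose 2)"
proof (induction n)
  case 0 then show ?case by simp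
next
  case (Suc n)
  have "(\<Sum>i = 1..int (Suc n). i) = (\<Sum>i = 1..int n. i) + (int n + 1)"
    using sum_int_top[of 1 "int n" id] by (simp add: add.commute)
  also have "\<dots> = int ((n + 1) choose 2) + int (n + 1)" using Suc by simp
  also have "\<dots> = int ((Suc n + 1) choose 2)"
    using binomial_Suc_Suc[of "n+1" 1] by (simp add: numeral_2_eq_2)
  finally show ?case .
qed

lemma om_sum:
  assumes "Cgood n c"
  shows "(\<Sum>i = 1..int n. om c i) = int ((n + 1) choose 2)"
proof -
  from assms obtain a where ca: "c a = 0" unfolding Cgood_def by blast
  define g where "g i = om c i - i" for i
  have per: "g (t + int n) = g t" for t unfolding g_def using om_per[OF assms] by simp
  have "sum (om c) {a<..a + int n} = sum id (om c ` {a<..a + int n})"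
    using sum.reindex[of "om c" "{a<..a + int n}" id] om_inj[OF assms] by (simp add: inj_on_def inj_def)
  then have "sum (om c) {a<..a + int n} = sum id {a<..a + int n}" using om_block[OF assms ca] by simp
  moreover have "{a<..a + int n} = {a+1..a+int n}" by auto
  ultimately have "sum g {a+1..a+int n} = 0" unfolding g_def by (simp add: sum_subtractf)
  then have "sum g {1..int n} = 0" using win_sum[of g n a, OF per] by simp
  then have "(\<Sum>i = 1..int n. om c i) = (\<Sum>i = 1..int n. i)" unfolding g_def by (simp add: sum_subtractf)
  then show ?thesis using gauss_int by simp
qed

lemma om_affine:
  assumes "Cgood n c"
  shows "affine_perm n (om c)"
  unfolding affine_perm_def using om_inj[OF assms] om_surj[OF assms] om_per[OF assms] om_sum[OF assms]
  by (simp add: bij_def)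

definition code :: "(int \<Rightarrow> int) \<Rightarrow> int \<Rightarrow> int" where
  "code w t = int (card {j. t < j \<and> w j < w t})"

definition Sset :: "(int \<Rightarrow> int) \<Rightarrow> int \<Rightarrow> int set" where
  "Sset c t = {j. t < j \<and> (\<forall>k. t \<le> k \<and> k < j \<longrightarrow> c j < c k)}"

lemma Sset_count:
  assumes "Cgood n c"
  shows "c t = int m \<Longrightarrow> finite (Sset c t) \<and> card (Sset c t) = m"
proof (induction m arbitrary: t)
  case 0
  have "j \<notin> Sset c t" for j
  proof
    assume "j \<in> Sset c t"
    then have "c j < c t" unfolding Sset_def by auto
    moreover have "0 \<le> c j" using assms unfolding Cgood_def by blast
    ultimately show False using 0 by simp
  qed
  then have "Sset c t = {}" by blast
  then show ?case by simp
next
  case (Suc L)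
  have ex: "\<exists>k::nat. 0 < k \<and> c (t + int k) \<le> int L"
  proof -
    obtain z where "t < z" "c z = 0" using zero_above[OF assms] by blast
    then show ?thesis by (intro exI[of _ "nat (z - t)"]) auto
  qed
  define K where "K = (LEAST k::nat. 0 < k \<and> c (t + int k) \<le> int L)"
  define t' where "t' = t + int K"
  have K: "0 < K" "c t' \<le> int L" using LeastI_ex[OF ex] unfolding K_def t'_def by auto
  have below: "int L < c k" if "t \<le> k" "k < t'" for k
  proof (cases "k = t")
    case True then show ?thesis using Suc.prems by simp
  next
    case False
    define j where "j = nat (k - t)"
    have j: "0 < j" "j < K" "k = t + int j" using that False unfolding j_def t'_def by auto
    have "\<not> (0 < j \<and> c (t + int j) \<le> int L)"
      using not_less_Least[of j "\<lambda>k. 0 < k \<and> c (t + int k) \<le> int L"] j(2) unfolding K_def by blast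
    then show ?thesis using j by auto
  qed
  have ct': "c t' = int L"
  proof -
    have "c (t' - 1) \<le> c t' + 1" using assms unfolding Cgood_def by (metis diff_add_cancel)
    moreover have "int L < c (t' - 1)" using below[of "t' - 1"] K(1) unfolding t'_def by simp
    ultimately show ?thesis using K(2) by simp
  qed
  have tt': "t < t'" using K(1) unfolding t'_def by simp
  have eq: "Sset c t = insert t' (Sset c t')"
  proof (intro set_eqI iffI)
    fix j assume j: "j \<in> Sset c t"
    then have jt: "t < j" and all: "\<And>k. t \<le> k \<Longrightarrow> k < j \<Longrightarrow> c j < c k" unfolding Sset_def by auto
    consider "j < t'" | "j = t'" | "t' < j" by linarith
    then show "j \<in> insert t' (Sset c t')"
    proof cases
      case 1
      then have "int L < c j" using below[of j] jt by simp
      moreover have "c j < c t" using all[of t] jt by simp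
      ultimately show ?thesis using Suc.prems by simp
    next
      case 2 then show ?thesis by simp
    next
      case 3 then show ?thesis using all tt' unfolding Sset_def by auto
    qed
  next
    fix j assume "j \<in> insert t' (Sset c t')"
    then consider "j = t'" | "j \<in> Sset c t'" by blast
    then show "j \<in> Sset c t"
    proof cases
      case 1 then show ?thesis using tt' below ct' unfolding Sset_def by auto
    next
      case 2
      then have jt: "t' < j" and all: "\<And>k. t' \<le> k \<Longrightarrow> k < j \<Longrightarrow> c j < c k" unfolding Sset_def by auto
      have "c j < c t'" using all[of t'] jt by simp
      then have "c j < c k" if "t \<le> k" "k < j" for k
        using all[of k] below[of k] that ct' by (cases "k < t'") auto
      then show ?thesis using jt tt' unfolding Sset_def by auto
    qed
  qed
  have "finite (Sset c t') \<and> card (Sset c t') = L" using Suc.IH ct' by simp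
  moreover have "t' \<notin> Sset c t'" unfolding Sset_def by simp
  ultimately show ?case using eq by simp
qed

lemma om_code:
  assumes "Cgood n c"
  shows "code (om c) t = c t"
proof -
  have "{j. t < j \<and> om c j < om c t} = Sset c t"
  proof (intro set_eqI iffI)
    fix j assume "j \<in> {j. t < j \<and> om c j < om c t}"
    then have j: "t < j" "om c j < om c t" by auto
    then have "sf c j < t" using crit1[OF assms j(1)] by force
    then have "c j < c k" if "t \<le> k" "k < j" for k
      using sf_between[OF assms, of j k] that by simp
    then show "j \<in> Sset c t" using j unfolding Sset_def by auto
  next
    fix j assume "j \<in> Sset c t"
    then have j: "t < j" and all: "\<And>k. t \<le> k \<Longrightarrow> k < j \<Longrightarrow> c j < c k" unfolding Sset_def by auto
    have "sf c j < t"
    proof (rule ccontr)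
      assume "\<not> sf c j < t"
      then show False using all[of "sf c j"] sf_props[OF assms, of j] by simp
    qed
    then show "j \<in> {j. t < j \<and> om c j < om c t}" using crit2[OF assms j] j by simp
  qed
  moreover have "0 \<le> c t" using assms unfolding Cgood_def by blast
  ultimately show ?thesis unfolding code_def using Sset_count[OF assms, of t "nat (c t)"] by simp
qed

definition av312 :: "(int \<Rightarrow> int) \<Rightarrow> bool" where
  "av312 w \<longleftrightarrow> \<not> (\<exists>i j k. i < j \<and> j < k \<and> w j < w k \<and> w k < w i)"

lemma om_av312:
  assumes "Cgood n c"
  shows "av312 (om c)"
  unfolding av312_def
proof
  assume "\<exists>i j k. i < j \<and> j < k \<and> om c j < om c k \<and> om c k < om c i"
  then obtain i j k where ijk: "i < j" "j < k" "om c j < om c k" "om c k < om c i" by blast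
  have "j \<le> sf c k" using crit[OF assms ijk(2)] ijk(3) by simp
  moreover have "\<not> i \<le> sf c k" using crit[OF assms, of i k] ijk by simp
  ultimately show False using ijk(1) by simp
qed

lemma strict_mono_int_shift:
  fixes f :: "int \<Rightarrow> int"
  assumes mono: "\<And>x y. x < y \<Longrightarrow> f x < f y" and sur: "surj f"
  shows "f y = y + f 0"
proof -
  have step: "f (x + 1) = f x + 1" for x
  proof (rule ccontr)
    assume ne: "f (x + 1) \<noteq> f x + 1"
    have "f x < f (x + 1)" using mono by simp
    then have lt: "f x + 1 < f (x + 1)" using ne by simp
    obtain z where z: "f z = f x + 1" using sur by (metis surjD)
    have "x < z"
    proof (rule ccontr)
      assume "\<not> x < z"
      then have "f z \<le> f x" using mono[of z x] by (cases "z = x") auto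
      then show False using z by simp
    qed
    moreover have "z < x + 1"
    proof (rule ccontr)
      assume "\<not> z < x + 1"
      then have "f (x+1) \<le> f z" using mono[of "x+1" z] by (cases "z = x + 1") auto
      then show False using z lt by simp
    qed
    ultimately show False by simp
  qed
  show ?thesis
  proof (induction y rule: int_induct[where k=0])
    case base then show ?case by simp
  next
    case (step1 i) then show ?case using step[of i] by simp
  next
    case (step2 i) then show ?case using step[of "i - 1"] by simp
  qed
qed

lemma L_order:
  assumes w: "affine_perm n w" and w': "affine_perm n w'" and n: "0 < n"
    and ord: "\<And>a b. a < b \<Longrightarrow> (w a < w b \<longleftrightarrow> w' a < w' b)"
  shows "w = w'"
proof -
  have bw: "bij w" and bw': "bij w'" using w w' unfolding affine_perm_def by auto
  define f where "f = w' \<circ> inv w"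
  have winv: "w (inv w x) = x" for x using bw by (simp add: bij_is_surj surj_f_inv_f)
  have mono: "f x < f y" if "x < y" for x y
  proof -
    define a where "a = inv w x"
    define b where "b = inv w y"
    have wa: "w a = x" "w b = y" unfolding a_def b_def using winv by auto
    have "a \<noteq> b" using wa that by auto
    have "w' a \<noteq> w' b" using \<open>a \<noteq> b\<close> bw' by (metis bij_is_inj injD)
    then have "w' a < w' b"
    proof (cases "a < b")
      case True then show ?thesis using ord[of a b] wa that by simp
    next
      case False
      then have "b < a" using \<open>a \<noteq> b\<close> by simp
      then show ?thesis using ord[of b a] wa that \<open>w' a \<noteq> w' b\<close> by auto
    qed
    then show ?thesis unfolding f_def a_def b_def by simp
  qed
  have "surj f"
  proof (rule surjI)
    fix y show "f (w (inv w' y)) = y" unfolding f_def using bw bw'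
      by (simp add: bij_is_inj bij_is_surj surj_f_inv_f inv_f_f)
  qed
  then have fs: "f y = y + f 0" for y using strict_mono_int_shift[of f, OF mono \<open>surj f\<close>] by blast
  have ww: "w' t = w t + f 0" for t
  proof -
    have "inv w (w t) = t" using bw by (simp add: bij_is_inj)
    then have "f (w t) = w' t" unfolding f_def by simp
    then show ?thesis using fs[of "w t"] by simp
  qed
  have "(\<Sum>i = 1..int n. w' i) = (\<Sum>i = 1..int n. w i) + int n * f 0"
    using ww by (simp add: sum.distrib)
  moreover have "(\<Sum>i = 1..int n. w' i) = (\<Sum>i = 1..int n. w i)"
    using w w' unfolding affine_perm_def by simp
  ultimately have "f 0 = 0" using n by simp
  then show ?thesis using ww by auto
qed

lemma aff_per: "affine_perm n w \<Longrightarrow> w (t + int n) = w t + int n"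
  unfolding affine_perm_def by blast

lemma aff_inj: "affine_perm n w \<Longrightarrow> inj w"
  unfolding affine_perm_def by (simp add: bij_is_inj)

lemma aff_bound:
  assumes "affine_perm n w" "0 < n"
  shows "\<exists>M. \<forall>t. \<bar>w t - t\<bar> \<le> M"
proof -
  define g where "g t = \<bar>w t - t\<bar>" for t
  have per: "g (t + int n) = g t" for t unfolding g_def using aff_per[OF assms(1)] by simp
  define M where "M = Max (g ` {0..<int n})"
  have "g t \<le> M" for t
  proof -
    have "g t = g (t mod int n)" using per_mod[of g n, OF per] .
    moreover have "t mod int n \<in> {0..<int n}" using assms(2) by simp
    ultimately show ?thesis unfolding M_def by simp
  qed
  then show ?thesis unfolding g_def by blast
qed

lemma code_fin:
  assumes "affine_perm n w" "0 < n"
  shows "finite {j. t < j \<and> w j < w t}"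
proof -
  obtain M where M: "\<And>t. \<bar>w t - t\<bar> \<le> M" using aff_bound[OF assms] by blast
  have "{j. t < j \<and> w j < w t} \<subseteq> {t<..w t + M}"
  proof
    fix j assume "j \<in> {j. t < j \<and> w j < w t}"
    moreover have "\<bar>w j - j\<bar> \<le> M" using M .
    ultimately show "j \<in> {t<..w t + M}" by auto
  qed
  then show ?thesis by (rule finite_subset) simp
qed

lemma code_nonneg: "0 \<le> code w t" unfolding code_def by simp

lemma code_per:
  assumes "affine_perm n w"
  shows "code w (t + int n) = code w t"
proof -
  have "{j. t + int n < j \<and> w j < w (t + int n)} = (\<lambda>j. j + int n) ` {j. t < j \<and> w j < w t}"
  proof (intro set_eqI iffI)
    fix j assume "j \<in> {j. t + int n < j \<and> w j < w (t + int n)}"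
    then have "j - int n \<in> {j. t < j \<and> w j < w t}"
      using aff_per[OF assms, of "j - int n"] aff_per[OF assms, of t] by auto
    then show "j \<in> (\<lambda>j. j + int n) ` {j. t < j \<and> w j < w t}" by force
  next
    fix j assume "j \<in> (\<lambda>j. j + int n) ` {j. t < j \<and> w j < w t}"
    then show "j \<in> {j. t + int n < j \<and> w j < w (t + int n)}"
      using aff_per[OF assms] by auto
  qed
  moreover have "inj (\<lambda>j::int. j + int n)" by (simp add: inj_def)
  ultimately show ?thesis unfolding code_def by (simp add: card_image inj_on_def)
qed

lemma code_step:
  assumes "affine_perm n w" "0 < n" "av312 w"
  shows "code w t \<le> code w (t+1) + 1"
proof -
  have "{j. t < j \<and> w j < w t} \<subseteq> insert (t+1) {j. t + 1 < j \<and> w j < w (t+1)}"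
  proof
    fix j assume j: "j \<in> {j. t < j \<and> w j < w t}"
    show "j \<in> insert (t+1) {j. t + 1 < j \<and> w j < w (t+1)}"
    proof (cases "j = t + 1")
      case False
      then have "t + 1 < j" using j by auto
      moreover have "w j \<noteq> w (t+1)" using aff_inj[OF assms(1)] \<open>t + 1 < j\<close> by (metis injD less_irrefl)
      moreover have "\<not> w (t+1) < w j"
        using assms(3) j \<open>t + 1 < j\<close> unfolding av312_def by (metis (mono_tags) less_add_one mem_Collect_eq)
      ultimately show ?thesis by simp
    qed simp
  qed
  then have "card {j. t < j \<and> w j < w t} \<le> card (insert (t+1) {j. t + 1 < j \<and> w j < w (t+1)})"
    by (rule card_mono[rotated]) (simp add: code_fin[OF assms(1,2)])
  also have "\<dots> \<le> card {j. t + 1 < j \<and> w j < w (t+1)} + 1" by (simp add: card_insert_le_m1 card_insert_if)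
  finally show ?thesis unfolding code_def by simp
qed

lemma code_zero:
  assumes "affine_perm n w" "0 < n"
  shows "\<exists>z. code w z = 0"
proof -
  define g where "g t = w t - t" for t
  have per: "g (t + int n) = g t" for t unfolding g_def using aff_per[OF assms(1)] by simp
  define m where "m = Min (g ` {0..<int n})"
  have "m \<in> g ` {0..<int n}" unfolding m_def using assms(2) by (intro Min_in) auto
  then obtain z where z: "g z = m" by blast
  have gm: "m \<le> g t" for t
  proof -
    have "g t = g (t mod int n)" using per_mod[of g n, OF per] .
    moreover have "t mod int n \<in> {0..<int n}" using assms(2) by simp
    ultimately show ?thesis unfolding m_def by simp
  qed
  have E: "{j. z < j \<and> w j < w z} = {}"
  proof (rule ccontr)
    assume "{j. z < j \<and> w j < w z} \<noteq> {}"
    then obtain j where "z < j" "w j < w z" by auto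
    then have "g j < g z" unfolding g_def by simp
    then show False using gm[of j] z by simp
  qed
  have "code w z = 0" unfolding code_def E by simp
  then show ?thesis by blast
qed

lemma code_good:
  assumes "affine_perm n w" "0 < n" "av312 w"
  shows "Cgood n (code w)"
  unfolding Cgood_def using assms code_nonneg code_per[OF assms(1)] code_step[OF assms] code_zero[OF assms(1,2)]
  by blast

lemma A5:
  assumes "affine_perm n w" "0 < n" "av312 w" "t1 < t2"
  shows "w t1 < w t2 \<longleftrightarrow> t1 \<le> sf (code w) t2"
proof
  let ?c = "code w"
  have G: "Cgood n ?c" using code_good[OF assms(1-3)] .
  assume lt: "w t1 < w t2"
  have ex: "\<exists>d::nat. 0 < d \<and> w (t2 - int d) < w t2" using lt assms(4) by (intro exI[of _ "nat (t2 - t1)"]) auto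
  define K where "K = (LEAST d::nat. 0 < d \<and> w (t2 - int d) < w t2)"
  define k where "k = t2 - int K"
  have K: "0 < K" "w k < w t2" using LeastI_ex[OF ex] unfolding K_def k_def by auto
  have "K \<le> nat (t2 - t1)" unfolding K_def using lt assms(4) by (intro Least_le) auto
  then have kt1: "t1 \<le> k" unfolding k_def using assms(4) by simp
  have mid: "\<not> w m < w t2" if "k < m" "m < t2" for m
  proof -
    define d where "d = nat (t2 - m)"
    have d: "0 < d" "d < K" "m = t2 - int d" using that unfolding d_def k_def by auto
    show ?thesis using not_less_Least[of d "\<lambda>d. 0 < d \<and> w (t2 - int d) < w t2"] d unfolding K_def by auto
  qed
  have "{j. k < j \<and> w j < w k} \<subseteq> {j. t2 < j \<and> w j < w t2}"
  proof
    fix j assume j: "j \<in> {j. k < j \<and> w j < w k}"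
    have "t2 < j"
    proof (rule ccontr)
      assume "\<not> t2 < j"
      then consider "j < t2" | "j = t2" by linarith
      then show False
      proof cases
        case 1 then show False using mid[of j] j K by auto
      next
        case 2 then show False using j K by auto
      qed
    qed
    then show "j \<in> {j. t2 < j \<and> w j < w t2}" using j K by auto
  qed
  then have "?c k \<le> ?c t2" unfolding code_def by (simp add: card_mono code_fin[OF assms(1,2)])
  moreover have "k < t2" using K unfolding k_def by simp
  ultimately have "k \<le> sf ?c t2" using sf_max[OF G] by simp
  then show "t1 \<le> sf ?c t2" using kt1 by simp
next
  let ?c = "code w"
  have G: "Cgood n ?c" using code_good[OF assms(1-3)] .
  assume sle: "t1 \<le> sf ?c t2"
  show "w t1 < w t2"
  proof (rule ccontr)
    assume "\<not> w t1 < w t2"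
    moreover have "w t1 \<noteq> w t2" using aff_inj[OF assms(1)] assms(4) by (metis injD less_irrefl)
    ultimately have gt: "w t2 < w t1" by simp
    have big: "w t2 < w k" if "t1 \<le> k" "k < t2" for k
    proof (cases "k = t1")
      case True then show ?thesis using gt by simp
    next
      case False
      then have "t1 < k" using that by simp
      have "w k \<noteq> w t2" using aff_inj[OF assms(1)] that by (metis injD less_irrefl)
      moreover have "\<not> w k < w t2" using assms(3) \<open>t1 < k\<close> that gt unfolding av312_def by blast
      ultimately show ?thesis by simp
    qed
    have cbig: "?c t2 < ?c k" if "t1 \<le> k" "k < t2" for k
    proof -
      have sub: "insert t2 {j. t2 < j \<and> w j < w t2} \<subseteq> {j. k < j \<and> w j < w k}"
        using big[OF that] that by auto
      have "card (insert t2 {j. t2 < j \<and> w j < w t2}) \<le> card {j. k < j \<and> w j < w k}"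
        by (rule card_mono[OF code_fin[OF assms(1,2)] sub])
      moreover have "card (insert t2 {j. t2 < j \<and> w j < w t2}) = card {j. t2 < j \<and> w j < w t2} + 1"
        using code_fin[OF assms(1,2)] by simp
      ultimately show ?thesis unfolding code_def by simp
    qed
    have "sf ?c t2 < t2" "?c (sf ?c t2) \<le> ?c t2" using sf_props[OF G] by auto
    then show False using cbig[of "sf ?c t2"] sle by simp
  qed
qed

lemma av_om_code:
  assumes "affine_perm n w" "0 < n" "av312 w"
  shows "w = om (code w)"
proof (rule L_order[OF assms(1) om_affine[OF code_good[OF assms]] assms(2)])
  fix a b :: int assume "a < b"
  then show "(w a < w b) = (om (code w) a < om (code w) b)"
    using A5[OF assms \<open>a < b\<close>] crit[OF code_good[OF assms] \<open>a < b\<close>] by simp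
qed

definition A312 :: "nat \<Rightarrow> (int \<Rightarrow> int) set" where
  "A312 n = {w. affine_perm n w \<and> av312 w}"

definition Eset :: "nat \<Rightarrow> nat list set" where
  "Eset n = {l. length l = n \<and> sum_list l = n}"

definition Fm :: "nat \<Rightarrow> (int \<Rightarrow> int) \<Rightarrow> nat list" where
  "Fm n w = map (\<lambda>i. nat (code w (int i + 1) + 1 - code w (int i))) [0..<n]"

lemma sum_list_map_upt: "sum_list (map f [0..<n]) = (\<Sum>i<n. f i)"
proof -
  have "sum_list (map f [0..<n]) = sum ((!) (map f [0..<n])) {0..<n}" by (simp add: sum_list_sum_nth)
  also have "\<dots> = sum f {0..<n}" by (rule sum.cong) auto
  finally show ?thesis by (simp add: atLeast0LessThan)
qed

lemma Fm_in:
  assumes "w \<in> A312 n" "0 < n"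
  shows "Fm n w \<in> Eset n"
proof -
  have w: "affine_perm n w" "av312 w" using assms unfolding A312_def by auto
  let ?c = "code w"
  have nn: "0 \<le> ?c (int i + 1) + 1 - ?c (int i)" for i using code_step[OF w(1) assms(2) w(2), of "int i"] by simp
  have "int (sum_list (Fm n w)) = (\<Sum>i<n. int (nat (?c (int i + 1) + 1 - ?c (int i))))"
    unfolding Fm_def sum_list_map_upt by simp
  also have "\<dots> = (\<Sum>i<n. (?c (int (Suc i)) - ?c (int i)) + 1)" using nn by (intro sum.cong) (auto simp: add.commute)
  also have "\<dots> = (\<Sum>i<n. ?c (int (Suc i)) - ?c (int i)) + int n" by (simp add: sum.distrib)
  also have "\<dots> = ?c (int n) - ?c (int 0) + int n" by (subst sum_lessThan_telescope) simp
  also have "\<dots> = int n" using code_per[OF w(1), of 0] by simp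
  finally show ?thesis unfolding Eset_def Fm_def by simp
qed

lemma Fm_inj:
  assumes "0 < n"
  shows "inj_on (Fm n) (A312 n)"
proof (rule inj_onI)
  fix w w' assume ww: "w \<in> A312 n" "w' \<in> A312 n" and eq: "Fm n w = Fm n w'"
  have w: "affine_perm n w" "av312 w" "affine_perm n w'" "av312 w'" using ww unfolding A312_def by auto
  let ?c = "code w" and ?c' = "code w'"
  have G: "Cgood n ?c" "Cgood n ?c'" using code_good w assms by auto
  define \<delta> where "\<delta> t = ?c t - ?c' t" for t
  have per: "\<delta> (t + int n) = \<delta> t" for t unfolding \<delta>_def using code_per w by simp
  have st: "\<delta> (int i + 1) = \<delta> (int i)" if "i < n" for i
  proof -
    have "Fm n w ! i = Fm n w' ! i" using eq by simp
    then have "nat (?c (int i + 1) + 1 - ?c (int i)) = nat (?c' (int i + 1) + 1 - ?c' (int i))"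
      unfolding Fm_def using that by simp
    moreover have "0 \<le> ?c (int i + 1) + 1 - ?c (int i)" "0 \<le> ?c' (int i + 1) + 1 - ?c' (int i)"
      using code_step[OF w(1) assms w(2), of "int i"] code_step[OF w(3) assms w(4), of "int i"] by simp_all
    ultimately show ?thesis unfolding \<delta>_def by simp
  qed
  have d0: "\<delta> (int i) = \<delta> 0" if "i \<le> n" for i
    using that
  proof (induction i)
    case 0 then show ?case by simp
  next
    case (Suc i) then show ?case using st[of i] by (simp add: add.commute)
  qed
  have dall: "\<delta> t = \<delta> 0" for t
  proof -
    have "\<delta> t = \<delta> (t mod int n)" using per_mod[of \<delta> n, OF per] .
    moreover have "t mod int n = int (nat (t mod int n))" using assms by auto
    moreover have "t mod int n < int n" using assms by auto
    then have "nat (t mod int n) \<le> n" by linarith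
    ultimately show ?thesis using d0 by metis
  qed
  obtain z where z: "?c z = 0" using G(1) unfolding Cgood_def by blast
  obtain z' where z': "?c' z' = 0" using G(2) unfolding Cgood_def by blast
  have "0 \<le> ?c' z" "0 \<le> ?c z'" using code_nonneg by auto
  then have "\<delta> 0 = 0" using dall[of z] dall[of z'] z z' unfolding \<delta>_def by simp
  then have "?c = ?c'" using dall unfolding \<delta>_def by fastforce
  then show "w = w'" using av_om_code[OF w(1) assms w(2)] av_om_code[OF w(3) assms w(4)] by simp
qed

lemma mod_succ:
  fixes t :: int
  assumes "0 < N"
  shows "(t + 1) mod N = (if t mod N + 1 = N then 0 else t mod N + 1)"
proof -
  have "(t + 1) mod N = (t mod N + 1) mod N" by (simp add: mod_add_left_eq)
  moreover have "0 \<le> t mod N" "t mod N < N" using assms by auto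
  ultimately show ?thesis by auto
qed

lemma Fm_surj:
  assumes "0 < n" "e \<in> Eset n"
  shows "e \<in> Fm n ` A312 n"
proof -
  have len: "length e = n" and sm: "sum_list e = n" using assms(2) unfolding Eset_def by auto
  define S where "S r = (\<Sum>k<r. int (e ! k) - 1)" for r
  define m where "m = Min (S ` {..<n})"
  define c where "c t = S (nat (t mod int n)) - m" for t
  have Sn: "S n = 0"
  proof -
    have "S n = (\<Sum>k<n. int (e ! k)) - int n" unfolding S_def by (simp add: sum_subtractf)
    also have "(\<Sum>k<n. int (e ! k)) = int (sum_list e)"
      using sum_list_sum_nth[of e] len by (simp add: atLeast0LessThan)
    finally show ?thesis using sm by simp
  qed
  have Ssuc: "S (Suc r) = S r + int (e ! r) - 1" for r unfolding S_def by simp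
  have cstep: "c (t + 1) = c t + int (e ! nat (t mod int n)) - 1" for t
  proof (cases "t mod int n + 1 = int n")
    case True
    then have "nat (t mod int n) = n - 1" by simp
    moreover have "(t + 1) mod int n = 0" using mod_succ[of "int n" t] assms(1) True by simp
    moreover have "S n = S (n - 1) + int (e ! (n - 1)) - 1" using Ssuc[of "n-1"] assms(1) by simp
    ultimately show ?thesis unfolding c_def using Sn by (simp add: S_def)
  next
    case False
    then have "(t + 1) mod int n = t mod int n + 1" using mod_succ[of "int n" t] assms(1) by simp
    moreover have "0 \<le> t mod int n" using assms(1) by simp
    ultimately have "nat ((t + 1) mod int n) = Suc (nat (t mod int n))" by simp
    then show ?thesis unfolding c_def using Ssuc by simp
  qed
  have G: "Cgood n c"
    unfolding Cgood_def
  proof (intro conjI allI)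
    show "0 < n" by fact
    fix t
    have "nat (t mod int n) \<in> {..<n}" using assms(1) by (simp add: nat_less_iff)
    then show "0 \<le> c t" unfolding c_def m_def by simp
  next
    fix t show "c (t + int n) = c t" unfolding c_def by simp
  next
    fix t show "c t \<le> c (t + 1) + 1" using cstep[of t] by simp
  next
    have "m \<in> S ` {..<n}" unfolding m_def using assms(1) by (intro Min_in) auto
    then obtain r where r: "r < n" "S r = m" by auto
    then have "c (int r) = 0" unfolding c_def by simp
    then show "\<exists>z. c z = 0" by blast
  qed
  define w where "w = om c"
  have wA: "w \<in> A312 n" unfolding A312_def w_def using om_affine[OF G] om_av312[OF G] by simp
  have cw: "code w = c" unfolding w_def using om_code[OF G] by (simp add: fun_eq_iff)
  have "Fm n w = map (\<lambda>i. e ! i) [0..<n]"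
    unfolding Fm_def cw
  proof (rule map_cong[OF refl])
    fix i assume "i \<in> set [0..<n]"
    then have i: "i < n" by simp
    then have "nat (int i mod int n) = i" by simp
    then show "nat (c (int i + 1) + 1 - c (int i)) = e ! i" using cstep[of "int i"] by simp
  qed
  also have "\<dots> = e" using map_nth[of e] len by simp
  finally show ?thesis using wA by force
qed

lemma card_A312:
  assumes "0 < n"
  shows "finite (A312 n) \<and> card (A312 n) = (2 * n - 1) choose n"
proof -
  have bij: "bij_betw (Fm n) (A312 n) (Eset n)"
    unfolding bij_betw_def using Fm_inj[OF assms] Fm_in[OF _ assms] Fm_surj[OF assms] by blast
  have cE: "card (Eset n) = (2 * n - 1) choose n"
    unfolding Eset_def using card_length_sum_list[of n n] by (simp add: mult_2)
  moreover have "0 < (2 * n - 1) choose n" using assms by simp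
  ultimately have "finite (Eset n)" by (metis card.infinite less_irrefl)
  then show ?thesis using bij_betw_finite[OF bij] bij_betw_same_card[OF bij] cE by simp
qed

lemma all4: "(\<forall>a<(4::nat). P a) \<longleftrightarrow> P 0 \<and> P 1 \<and> P 2 \<and> P 3"
  by (auto simp: numeral_eq_Suc less_Suc_eq)

lemma contains4_iff:
  "contains_pattern w [p0,p1,p2,p3] \<longleftrightarrow> (\<exists>i0 i1 i2 i3. i0 < i1 \<and> i1 < i2 \<and> i2 < i3 \<and>
     (w i0 < w i1 \<longleftrightarrow> p0 < p1) \<and> (w i1 < w i0 \<longleftrightarrow> p1 < p0) \<and>
     (w i0 < w i2 \<longleftrightarrow> p0 < p2) \<and> (w i2 < w i0 \<longleftrightarrow> p2 < p0) \<and>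
     (w i0 < w i3 \<longleftrightarrow> p0 < p3) \<and> (w i3 < w i0 \<longleftrightarrow> p3 < p0) \<and>
     (w i1 < w i2 \<longleftrightarrow> p1 < p2) \<and> (w i2 < w i1 \<longleftrightarrow> p2 < p1) \<and>
     (w i1 < w i3 \<longleftrightarrow> p1 < p3) \<and> (w i3 < w i1 \<longleftrightarrow> p3 < p1) \<and>
     (w i2 < w i3 \<longleftrightarrow> p2 < p3) \<and> (w i3 < w i2 \<longleftrightarrow> p3 < p2))"
  (is "?L \<longleftrightarrow> ?R")
proof -
  have len: "length [p0,p1,p2,p3] = 4" by simp
  show ?thesis
  proof
    assume ?L
    then obtain \<iota> :: "nat \<Rightarrow> int" where
      o: "\<forall>a b. a < b \<and> b < 4 \<longrightarrow> \<iota> a < \<iota> b" and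
      v: "\<forall>a<4. \<forall>b<4. w (\<iota> a) < w (\<iota> b) \<longleftrightarrow> [p0,p1,p2,p3] ! a < [p0,p1,p2,p3] ! b"
      using \<open>?L\<close> unfolding contains_pattern_def len by (elim exE conjE)
    have "\<iota> 0 < \<iota> 1" "\<iota> 1 < \<iota> 2" "\<iota> 2 < \<iota> 3" using o by auto
    moreover have "(w (\<iota> 0) < w (\<iota> 1) \<longleftrightarrow> p0 < p1)" "(w (\<iota> 1) < w (\<iota> 0) \<longleftrightarrow> p1 < p0)"
       "(w (\<iota> 0) < w (\<iota> 2) \<longleftrightarrow> p0 < p2)" "(w (\<iota> 2) < w (\<iota> 0) \<longleftrightarrow> p2 < p0)"
       "(w (\<iota> 0) < w (\<iota> 3) \<longleftrightarrow> p0 < p3)" "(w (\<iota> 3) < w (\<iota> 0) \<longleftrightarrow> p3 < p0)"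
       "(w (\<iota> 1) < w (\<iota> 2) \<longleftrightarrow> p1 < p2)" "(w (\<iota> 2) < w (\<iota> 1) \<longleftrightarrow> p2 < p1)"
       "(w (\<iota> 1) < w (\<iota> 3) \<longleftrightarrow> p1 < p3)" "(w (\<iota> 3) < w (\<iota> 1) \<longleftrightarrow> p3 < p1)"
       "(w (\<iota> 2) < w (\<iota> 3) \<longleftrightarrow> p2 < p3)" "(w (\<iota> 3) < w (\<iota> 2) \<longleftrightarrow> p3 < p2)"
      using v[rule_format, of 0 1] v[rule_format, of 1 0] v[rule_format, of 0 2] v[rule_format, of 2 0]
      v[rule_format, of 0 3] v[rule_format, of 3 0] v[rule_format, of 1 2] v[rule_format, of 2 1]
      v[rule_format, of 1 3] v[rule_format, of 3 1] v[rule_format, of 2 3] v[rule_format, of 3 2]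
      by (simp_all add: numeral_eq_Suc)
    ultimately show ?R
      apply - apply (rule exI[of _ "\<iota> 0"]) apply (rule exI[of _ "\<iota> 1"])
      apply (rule exI[of _ "\<iota> 2"]) apply (rule exI[of _ "\<iota> 3"])
      by (intro conjI) assumption+
  next
    assume ?R
    then obtain i0 i1 i2 i3 where h: "i0 < i1" "i1 < i2" "i2 < i3"
       "(w i0 < w i1 \<longleftrightarrow> p0 < p1)" "(w i1 < w i0 \<longleftrightarrow> p1 < p0)"
       "(w i0 < w i2 \<longleftrightarrow> p0 < p2)" "(w i2 < w i0 \<longleftrightarrow> p2 < p0)"
       "(w i0 < w i3 \<longleftrightarrow> p0 < p3)" "(w i3 < w i0 \<longleftrightarrow> p3 < p0)"
       "(w i1 < w i2 \<longleftrightarrow> p1 < p2)" "(w i2 < w i1 \<longleftrightarrow> p2 < p1)"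
       "(w i1 < w i3 \<longleftrightarrow> p1 < p3)" "(w i3 < w i1 \<longleftrightarrow> p3 < p1)"
       "(w i2 < w i3 \<longleftrightarrow> p2 < p3)" "(w i3 < w i2 \<longleftrightarrow> p3 < p2)"
      using \<open>?R\<close> by (elim exE conjE) (rule that; assumption)
    define \<iota> where "\<iota> = (\<lambda>a::nat. [i0,i1,i2,i3] ! a)"
    have o: "\<forall>a b. a < b \<and> b < 4 \<longrightarrow> \<iota> a < \<iota> b"
    proof (intro allI impI)
      fix a b :: nat assume "a < b \<and> b < 4"
      then have "(a = 0 \<and> b = 1) \<or> (a = 0 \<and> b = 2) \<or> (a = 0 \<and> b = 3) \<or> (a = 1 \<and> b = 2) \<or> (a = 1 \<and> b = 3) \<or> (a = 2 \<and> b = 3)"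
        by (auto simp: numeral_eq_Suc less_Suc_eq)
      then show "\<iota> a < \<iota> b" using h(1-3) unfolding \<iota>_def by auto
    qed
    have v: "\<forall>a<4. \<forall>b<4. w (\<iota> a) < w (\<iota> b) \<longleftrightarrow> [p0,p1,p2,p3] ! a < [p0,p1,p2,p3] ! b"
      unfolding all4 \<iota>_def using h(4-15) by simp
    show ?L unfolding contains_pattern_def len
      apply (rule exI[of _ \<iota>]) apply (rule conjI) apply (fact o) apply (fact v) done
  qed
qed

lemma c1234: "contains_pattern w [1,2,3,4] \<longleftrightarrow> (\<exists>i j k l. i<j \<and> j<k \<and> k<l \<and> w i < w j \<and> w j < w k \<and> w k < w l)"
  unfolding contains4_iff apply (rule iffI)
   apply (elim exE conjE)
  subgoal for i j k l by (rule exI[of _ i], rule exI[of _ j], rule exI[of _ k], rule exI[of _ l]) simp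
  apply (elim exE conjE)
  subgoal for i j k l by (rule exI[of _ i], rule exI[of _ j], rule exI[of _ k], rule exI[of _ l]) auto
  done

lemma c1243: "contains_pattern w [1,2,4,3] \<longleftrightarrow> (\<exists>i j k l. i<j \<and> j<k \<and> k<l \<and> w i < w j \<and> w j < w l \<and> w l < w k)"
  unfolding contains4_iff apply (rule iffI)
   apply (elim exE conjE)
  subgoal for i j k l by (rule exI[of _ i], rule exI[of _ j], rule exI[of _ k], rule exI[of _ l]) simp
  apply (elim exE conjE)
  subgoal for i j k l by (rule exI[of _ i], rule exI[of _ j], rule exI[of _ k], rule exI[of _ l]) auto
  done

lemma c1324: "contains_pattern w [1,3,2,4] \<longleftrightarrow> (\<exists>i j k l. i<j \<and> j<k \<and> k<l \<and> w i < w k \<and> w k < w j \<and> w j < w l)"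
  unfolding contains4_iff apply (rule iffI)
   apply (elim exE conjE)
  subgoal for i j k l by (rule exI[of _ i], rule exI[of _ j], rule exI[of _ k], rule exI[of _ l]) simp
  apply (elim exE conjE)
  subgoal for i j k l by (rule exI[of _ i], rule exI[of _ j], rule exI[of _ k], rule exI[of _ l]) auto
  done

lemma c2134: "contains_pattern w [2,1,3,4] \<longleftrightarrow> (\<exists>i j k l. i<j \<and> j<k \<and> k<l \<and> w j < w i \<and> w i < w k \<and> w k < w l)"
  unfolding contains4_iff apply (rule iffI)
   apply (elim exE conjE)
  subgoal for i j k l by (rule exI[of _ i], rule exI[of _ j], rule exI[of _ k], rule exI[of _ l]) simp
  apply (elim exE conjE)
  subgoal for i j k l by (rule exI[of _ i], rule exI[of _ j], rule exI[of _ k], rule exI[of _ l]) auto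
  done

lemma c2143: "contains_pattern w [2,1,4,3] \<longleftrightarrow> (\<exists>i j k l. i<j \<and> j<k \<and> k<l \<and> w j < w i \<and> w i < w l \<and> w l < w k)"
  unfolding contains4_iff apply (rule iffI)
   apply (elim exE conjE)
  subgoal for i j k l by (rule exI[of _ i], rule exI[of _ j], rule exI[of _ k], rule exI[of _ l]) simp
  apply (elim exE conjE)
  subgoal for i j k l by (rule exI[of _ i], rule exI[of _ j], rule exI[of _ k], rule exI[of _ l]) auto
  done

lemma c1342: "contains_pattern w [1,3,4,2] \<longleftrightarrow> (\<exists>i j k l. i<j \<and> j<k \<and> k<l \<and> w i < w l \<and> w l < w j \<and> w j < w k)"
  unfolding contains4_iff apply (rule iffI)
   apply (elim exE conjE)
  subgoal for i j k l by (rule exI[of _ i], rule exI[of _ j], rule exI[of _ k], rule exI[of _ l]) simp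
  apply (elim exE conjE)
  subgoal for i j k l by (rule exI[of _ i], rule exI[of _ j], rule exI[of _ k], rule exI[of _ l]) auto
  done

lemma c1423: "contains_pattern w [1,4,2,3] \<longleftrightarrow> (\<exists>i j k l. i<j \<and> j<k \<and> k<l \<and> w i < w k \<and> w k < w l \<and> w l < w j)"
  unfolding contains4_iff apply (rule iffI)
   apply (elim exE conjE)
  subgoal for i j k l by (rule exI[of _ i], rule exI[of _ j], rule exI[of _ k], rule exI[of _ l]) simp
  apply (elim exE conjE)
  subgoal for i j k l by (rule exI[of _ i], rule exI[of _ j], rule exI[of _ k], rule exI[of _ l]) auto
  done

lemma c2314: "contains_pattern w [2,3,1,4] \<longleftrightarrow> (\<exists>i j k l. i<j \<and> j<k \<and> k<l \<and> w k < w i \<and> w i < w j \<and> w j < w l)"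
  unfolding contains4_iff apply (rule iffI)
   apply (elim exE conjE)
  subgoal for i j k l by (rule exI[of _ i], rule exI[of _ j], rule exI[of _ k], rule exI[of _ l]) simp
  apply (elim exE conjE)
  subgoal for i j k l by (rule exI[of _ i], rule exI[of _ j], rule exI[of _ k], rule exI[of _ l]) auto
  done

lemma c3124: "contains_pattern w [3,1,2,4] \<longleftrightarrow> (\<exists>i j k l. i<j \<and> j<k \<and> k<l \<and> w j < w k \<and> w k < w i \<and> w i < w l)"
  unfolding contains4_iff apply (rule iffI)
   apply (elim exE conjE)
  subgoal for i j k l by (rule exI[of _ i], rule exI[of _ j], rule exI[of _ k], rule exI[of _ l]) simp
  apply (elim exE conjE)
  subgoal for i j k l by (rule exI[of _ i], rule exI[of _ j], rule exI[of _ k], rule exI[of _ l]) auto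
  done

lemma id_aff: "affine_perm n id"
  unfolding affine_perm_def using gauss_int[of n] by simp

lemma aff_shift: "affine_perm n w \<Longrightarrow> w (t + q * int n) = w t + q * int n"
  by (rule aff_int) (rule aff_per)

lemma all_contain_1234:
  assumes "affine_perm n w" "0 < n"
  shows "contains_pattern w [1,2,3,4]"
  unfolding c1234
proof (intro exI conjI)
  show "0 < 0 + 1 * int n" "0 + 1 * int n < 0 + 2 * int n" "0 + 2 * int n < 0 + 3 * int n" using assms(2) by simp_all
  show "w 0 < w (0 + 1 * int n)" "w (0 + 1 * int n) < w (0 + 2 * int n)" "w (0 + 2 * int n) < w (0 + 3 * int n)"
    using aff_shift[OF assms(1), of 0 1] aff_shift[OF assms(1), of 0 2] aff_shift[OF assms(1), of 0 3] assms(2)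
    by simp_all
qed

lemma no_inv_id:
  assumes "affine_perm n w" "0 < n" "\<not> (\<exists>a b. a < b \<and> w b < w a)"
  shows "w = id"
proof (rule L_order[OF assms(1) id_aff assms(2)])
  fix a b :: int assume ab: "a < b"
  have "w a \<noteq> w b" using aff_inj[OF assms(1)] ab by (metis injD less_irrefl)
  then show "(w a < w b) = (id a < id b)" using assms(3) ab by force
qed

lemma inv_contains:
  assumes w: "affine_perm n w" and n: "0 < n" and ab: "a < b" "w b < w a"
  shows "contains_pattern w [1,2,4,3] \<and> contains_pattern w [1,3,2,4] \<and> contains_pattern w [2,1,3,4]
    \<and> contains_pattern w [2,1,4,3]"
proof -
  define m where "m = (w a - w b) + (b - a) + 1"
  have m: "0 < m" "w a - w b < m" "b - a < m" using ab unfolding m_def by auto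
  have mn: "m \<le> m * int n" using n m(1) by simp
  define M where "M = m * int n"
  have sh: "\<And>t q. w (t + q * int n) = w t + q * int n" using aff_shift[OF w] .
  have w1: "w (a - 2 * M) = w a - 2 * M" using sh[of a "-2 * m"] unfolding M_def by (simp add: algebra_simps)
  have w2: "w (a - M) = w a - M" using sh[of a "-m"] unfolding M_def by (simp add: algebra_simps)
  have w3: "w (a + M) = w a + M" using sh[of a m] unfolding M_def by (simp add: algebra_simps)
  have w4: "w (a + 2 * M) = w a + 2 * M" using sh[of a "2 * m"] unfolding M_def by (simp add: algebra_simps)
  have w5: "w (b + M) = w b + M" using sh[of b m] unfolding M_def by (simp add: algebra_simps)
  have Mm: "m \<le> M" using mn unfolding M_def .
  have p1: "contains_pattern w [1,2,4,3]" unfolding c1243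
    apply (rule exI[of _ "a - 2 * M"], rule exI[of _ "a - M"], rule exI[of _ a], rule exI[of _ b])
    using w1 w2 Mm m ab by auto
  have p2: "contains_pattern w [1,3,2,4]" unfolding c1324
    apply (rule exI[of _ "a - M"], rule exI[of _ a], rule exI[of _ b], rule exI[of _ "a + M"])
    using w2 w3 Mm m ab by auto
  have p3: "contains_pattern w [2,1,3,4]" unfolding c2134
    apply (rule exI[of _ a], rule exI[of _ b], rule exI[of _ "a + M"], rule exI[of _ "a + 2 * M"])
    using w3 w4 Mm m ab by auto
  have p4: "contains_pattern w [2,1,4,3]" unfolding c2143
    apply (rule exI[of _ a], rule exI[of _ b], rule exI[of _ "a + M"], rule exI[of _ "b + M"])
    using w3 w5 Mm m ab by auto
  show ?thesis using p1 p2 p3 p4 by blast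
qed

definition av231 :: "(int \<Rightarrow> int) \<Rightarrow> bool" where
  "av231 w \<longleftrightarrow> \<not> (\<exists>i j k. i < j \<and> j < k \<and> w k < w i \<and> w i < w j)"

definition A231 :: "nat \<Rightarrow> (int \<Rightarrow> int) set" where
  "A231 n = {w. affine_perm n w \<and> av231 w}"

definition rcf :: "nat \<Rightarrow> (int \<Rightarrow> int) \<Rightarrow> (int \<Rightarrow> int)" where
  "rcf n w = (\<lambda>i. int n + 1 - w (int n + 1 - i))"

lemma rcf_rcf: "rcf n (rcf n w) = w"
  unfolding rcf_def by simp

lemma reflect_sum:
  fixes f :: "int \<Rightarrow> int"
  shows "(\<Sum>i = 1..int n. f (int n + 1 - i)) = (\<Sum>i = 1..int n. f i)"
  by (rule sum.reindex_bij_witness[of _ "\<lambda>j. int n + 1 - j" "\<lambda>j. int n + 1 - j"]) auto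

lemma rcf_aff:
  assumes "affine_perm n w"
  shows "affine_perm n (rcf n w)"
proof -
  let ?N = "int n + 1"
  have bw: "bij w" using assms unfolding affine_perm_def by simp
  have r: "rcf n w = (\<lambda>x. ?N - x) \<circ> w \<circ> (\<lambda>i. ?N - i)" unfolding rcf_def by (simp add: o_def)
  have b1: "bij (\<lambda>x::int. ?N - x)" by (rule o_bij[of "\<lambda>x::int. ?N - x"]) (auto simp: o_def)
  have bij: "bij (rcf n w)" unfolding r using b1 bw by (intro bij_comp) auto
  have per: "rcf n w (t + int n) = rcf n w t + int n" for t
  proof -
    have "w (?N - t - int n + int n) = w (?N - t - int n) + int n" using aff_per[OF assms] by blast
    then show ?thesis unfolding rcf_def by (simp add: algebra_simps)
  qed
  have "(\<Sum>i = 1..int n. rcf n w i) = (\<Sum>i = 1..int n. ?N - w i)"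
    unfolding rcf_def using reflect_sum[of "\<lambda>j. ?N - w j" n] by simp
  also have "\<dots> = (\<Sum>i = 1..int n. ?N - i) + ((\<Sum>i = 1..int n. i) - (\<Sum>i = 1..int n. w i))"
    by (simp add: sum_subtractf)
  also have "(\<Sum>i = 1..int n. w i) = (\<Sum>i = 1..int n. i)"
    using assms gauss_int[of n] unfolding affine_perm_def by simp
  also have "(\<Sum>i = 1..int n. ?N - i) = (\<Sum>i = 1..int n. i)"
    using reflect_sum[of "\<lambda>j. j" n] by simp
  finally have "(\<Sum>i = 1..int n. rcf n w i) = int ((n + 1) choose 2)" using gauss_int[of n] by simp
  then show ?thesis unfolding affine_perm_def using bij per by blast
qed

lemma rcf_av: "av312 (rcf n w) \<longleftrightarrow> av231 w"
proof -
  let ?N = "int n + 1"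
  have 1: "\<not> av312 (rcf n w)" if h0: "\<not> av231 w"
  proof -
    obtain i j k where h: "i < j" "j < k" "w k < w i" "w i < w j" using h0 unfolding av231_def by blast
    have "?N - k < ?N - j \<and> ?N - j < ?N - i \<and> rcf n w (?N - j) < rcf n w (?N - i) \<and> rcf n w (?N - i) < rcf n w (?N - k)"
      unfolding rcf_def using h by simp
    then show ?thesis unfolding av312_def by blast
  qed
  have 2: "\<not> av231 w" if h0: "\<not> av312 (rcf n w)"
  proof -
    obtain i j k where h: "i < j" "j < k" "rcf n w j < rcf n w k" "rcf n w k < rcf n w i"
      using h0 unfolding av312_def by blast
    have "?N - k < ?N - j \<and> ?N - j < ?N - i \<and> w (?N - i) < w (?N - k) \<and> w (?N - k) < w (?N - j)"
      using h unfolding rcf_def by simp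
    then show ?thesis unfolding av231_def by blast
  qed
  show ?thesis using 1 2 by blast
qed

lemma card_A231:
  assumes "0 < n"
  shows "finite (A231 n) \<and> card (A231 n) = (2 * n - 1) choose n"
proof -
  have eq: "A231 n = rcf n ` A312 n"
  proof (intro set_eqI iffI)
    fix w assume "w \<in> A231 n"
    then have "rcf n w \<in> A312 n" unfolding A231_def A312_def using rcf_aff rcf_av by auto
    then show "w \<in> rcf n ` A312 n" using rcf_rcf[of n w] by force
  next
    fix w assume "w \<in> rcf n ` A312 n"
    then obtain v where "v \<in> A312 n" "w = rcf n v" by blast
    then show "w \<in> A231 n" unfolding A231_def A312_def using rcf_aff rcf_av[of n w] rcf_rcf[of n v] by auto
  qed
  have "inj_on (rcf n) (A312 n)" by (metis inj_onI rcf_rcf)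
  then show ?thesis using card_A312[OF assms] eq by (simp add: card_image)
qed

lemma red_1342:
  assumes w: "affine_perm n w" and n: "0 < n"
  shows "contains_pattern w [1,3,4,2] \<longleftrightarrow> \<not> av231 w"
proof
  assume "contains_pattern w [1,3,4,2]"
  then obtain i j k l where "i<j" "j<k" "k<l" "w i < w l" "w l < w j" "w j < w k" unfolding c1342 by blast
  then show "\<not> av231 w" unfolding av231_def by blast
next
  assume "\<not> av231 w"
  then obtain i j k where h: "i < j" "j < k" "w k < w i" "w i < w j" unfolding av231_def by blast
  define m where "m = w i - w k + 1"
  define M where "M = m * int n"
  have "w (i - M) = w i - M" using aff_shift[OF w, of i "-m"] unfolding M_def by (simp add: algebra_simps)
  moreover have "m \<le> M" "0 < m" using n h unfolding m_def M_def by auto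
  ultimately have "i - M < i \<and> w (i - M) < w k" unfolding m_def by auto
  then show "contains_pattern w [1,3,4,2]" unfolding c1342 using h by blast
qed

lemma red_2314:
  assumes w: "affine_perm n w" and n: "0 < n"
  shows "contains_pattern w [2,3,1,4] \<longleftrightarrow> \<not> av231 w"
proof
  assume "contains_pattern w [2,3,1,4]"
  then obtain i j k l where "i<j" "j<k" "k<l" "w k < w i" "w i < w j" "w j < w l" unfolding c2314 by blast
  then show "\<not> av231 w" unfolding av231_def by blast
next
  assume "\<not> av231 w"
  then obtain i j k where h: "i < j" "j < k" "w k < w i" "w i < w j" unfolding av231_def by blast
  define m where "m = w j - w k + 1"
  define M where "M = m * int n"
  have "w (k + M) = w k + M" using aff_shift[OF w, of k m] unfolding M_def by (simp add: algebra_simps)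
  moreover have "m \<le> M" "0 < m" using n h unfolding m_def M_def by auto
  ultimately have "k < k + M \<and> w j < w (k + M)" unfolding m_def by auto
  then show "contains_pattern w [2,3,1,4]" unfolding c2314 using h by blast
qed

lemma red_1423:
  assumes w: "affine_perm n w" and n: "0 < n"
  shows "contains_pattern w [1,4,2,3] \<longleftrightarrow> \<not> av312 w"
proof
  assume "contains_pattern w [1,4,2,3]"
  then obtain i j k l where "i<j" "j<k" "k<l" "w i < w k" "w k < w l" "w l < w j" unfolding c1423 by blast
  then show "\<not> av312 w" unfolding av312_def by blast
next
  assume "\<not> av312 w"
  then obtain i j k where h: "i < j" "j < k" "w j < w k" "w k < w i" unfolding av312_def by blast
  define m where "m = w i - w j + 1"
  define M where "M = m * int n"
  have "w (i - M) = w i - M" using aff_shift[OF w, of i "-m"] unfolding M_def by (simp add: algebra_simps)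
  moreover have "m \<le> M" "0 < m" using n h unfolding m_def M_def by auto
  ultimately have "i - M < i \<and> w (i - M) < w j" unfolding m_def by auto
  then show "contains_pattern w [1,4,2,3]" unfolding c1423 using h by blast
qed

lemma red_3124:
  assumes w: "affine_perm n w" and n: "0 < n"
  shows "contains_pattern w [3,1,2,4] \<longleftrightarrow> \<not> av312 w"
proof
  assume "contains_pattern w [3,1,2,4]"
  then obtain i j k l where "i<j" "j<k" "k<l" "w j < w k" "w k < w i" "w i < w l" unfolding c3124 by blast
  then show "\<not> av312 w" unfolding av312_def by blast
next
  assume "\<not> av312 w"
  then obtain i j k where h: "i < j" "j < k" "w j < w k" "w k < w i" unfolding av312_def by blast
  define m where "m = w i - w k + 1"
  define M where "M = m * int n"
  have "w (k + M) = w k + M" using aff_shift[OF w, of k m] unfolding M_def by (simp add: algebra_simps)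
  moreover have "m \<le> M" "0 < m" using n h unfolding m_def M_def by auto
  ultimately have "k < k + M \<and> w i < w (k + M)" unfolding m_def by auto
  then show "contains_pattern w [3,1,2,4]" unfolding c3124 using h by blast
qed

theorem theorem5p1:
  fixes n :: nat
  assumes "n \<ge> 2"
  shows "avoiders n [1,2,3,4] = {}
    \<and> (\<forall>p \<in> {[1,2,4,3], [1,3,2,4], [2,1,3,4], [2,1,4,3]}. avoiders n p = {id})
    \<and> (\<forall>p \<in> {[1,3,4,2], [1,4,2,3], [2,3,1,4], [3,1,2,4]}.
          finite (avoiders n p) \<and> card (avoiders n p) = (2 * n - 1) choose n)"
proof -
  have n: "0 < n" using assms by simp
  have av: "avoiders n p = {w. affine_perm n w \<and> \<not> contains_pattern w p}" for p
    unfolding avoiders_def affine_sym_group_def avoids_pattern_def by simp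
  have P1: "avoiders n [1,2,3,4] = {}" unfolding av using all_contain_1234[OF _ n] by blast
  have idav: "\<not> contains_pattern id [1,2,4,3]" "\<not> contains_pattern id [1,3,2,4]"
    "\<not> contains_pattern id [2,1,3,4]" "\<not> contains_pattern id [2,1,4,3]"
    unfolding c1243 c1324 c2134 c2143 by auto
  have P2: "avoiders n p = {id}" if "p \<in> {[1,2,4,3], [1,3,2,4], [2,1,3,4], [2,1,4,3]}" for p
  proof -
    have cont: "contains_pattern w p" if w: "affine_perm n w" "w \<noteq> id" for w
    proof -
      obtain a b where "a < b" "w b < w a" using no_inv_id[OF w(1) n] w(2) by blast
      then show ?thesis using inv_contains[OF w(1) n \<open>a < b\<close> \<open>w b < w a\<close>] \<open>p \<in> _\<close> by auto
    qed
    have "\<not> contains_pattern id p" using idav \<open>p \<in> _\<close> by auto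
    then show ?thesis unfolding av using cont id_aff by blast
  qed
  have P3: "finite (avoiders n p) \<and> card (avoiders n p) = (2 * n - 1) choose n"
    if pin: "p \<in> {[1,3,4,2], [1,4,2,3], [2,3,1,4], [3,1,2,4]}" for p
  proof -
    consider "p = [1,3,4,2]" | "p = [1,4,2,3]" | "p = [2,3,1,4]" | "p = [3,1,2,4]" using pin by blast
    then show ?thesis
    proof cases
      case 1
      then have "avoiders n p = A231 n" unfolding av A231_def using red_1342[OF _ n] by auto
      then show ?thesis using card_A231[OF n] by simp
    next
      case 2
      then have "avoiders n p = A312 n" unfolding av A312_def using red_1423[OF _ n] by auto
      then show ?thesis using card_A312[OF n] by simp
    next
      case 3
      then have "avoiders n p = A231 n" unfolding av A231_def using red_2314[OF _ n] by auto
      then show ?thesis using card_A231[OF n] by simp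
    next
      case 4
      then have "avoiders n p = A312 n" unfolding av A312_def using red_3124[OF _ n] by auto
      then show ?thesis using card_A312[OF n] by simp
    qed
  qed
  show ?thesis using P1 P2 P3 by blast
qed

end
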